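(* Fix $\rho\in(0,1)$. For $\varepsilon>0$ let $V_{\text{fair}}(\varepsilon)=\{\alpha\in[0,1]^{2k}:\sum_{x,p}\alpha_{x,p}\pi_{x,p}=\rho,\ |\alpha_{x,1}-\alpha_{x,0}|\le\varepsilon\ \forall x\}$ and $V_{\text{mask}}(\varepsilon)=\{\alpha\in[0,1]^{2k}:\sum_{x,p}\alpha_{x,p}\pi_{x,p}=\rho,\ |\sum_{x=1}^k\Pr(X=x)(\alpha_{x,1}-\alpha_{x,0})|\le\varepsilon\}$, and let $\mathrm{Vol}$ denote $(2k-1)$-dimensional volume (Lebesgue measure on the hyperplane $\sum_{x,p}\alpha_{x,p}\pi_{x,p}=\rho$). Then there exist constants $0<c\le C$ and $\varepsilon_0>0$ (depending on $k,\pi,\rho$) such that for all $\varepsilon\in(0,\varepsilon_0]$: $c\,\varepsilon^k\le\mathrm{Vol}(V_{\text{fair}}(\varepsilon))\le C\,\varepsilon^k$ and $c\,\varepsilon\le\mathrm{Vol}(V_{\text{mask}}(\varepsilon))\le C\,\varepsilon$.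
   Context: Fix an integer $k\ge 2$, $X\in\{1,\dots,k\}$, $P\in\{0,1\}$, $\pi_{x,p}=\Pr(X=x,P=p)>0$ with $\sum_{x,p}\pi_{x,p}=1$, and $\Pr(X=x)=\pi_{x,0}+\pi_{x,1}$. Policies are vectors $\alpha=(\alpha_{x,p})\in[0,1]^{2k}$. $V_{\text{fair}}(\varepsilon)$ and $V_{\text{mask}}(\varepsilon)$ are the feasible sets of the $\varepsilon$-relaxed fairness and masking problems. *)

theory Defs
  imports "HOL-Analysis.Analysis"
begin

text \<open>Policies alpha are vectors indexed by pairs (x,p), x in a finite type of
  cardinality k, p in bool (False = 0, True = 1). The joint law pi is a vector
  with the same index type.\<close>

definition Vfair :: "real^('x::finite \<times> bool) \<Rightarrow> real \<Rightarrow> real \<Rightarrow> (real^('x \<times> bool)) set" where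
  "Vfair \<pi> \<rho> \<epsilon> = {\<alpha>. (\<forall>i. 0 \<le> \<alpha>$i \<and> \<alpha>$i \<le> 1) \<and>
      (\<Sum>i\<in>UNIV. \<alpha>$i * \<pi>$i) = \<rho> \<and>
      (\<forall>x. \<bar>\<alpha>$(x,True) - \<alpha>$(x,False)\<bar> \<le> \<epsilon>)}"

definition Vmask :: "real^('x::finite \<times> bool) \<Rightarrow> real \<Rightarrow> real \<Rightarrow> (real^('x \<times> bool)) set" where
  "Vmask \<pi> \<rho> \<epsilon> = {\<alpha>. (\<forall>i. 0 \<le> \<alpha>$i \<and> \<alpha>$i \<le> 1) \<and>
      (\<Sum>i\<in>UNIV. \<alpha>$i * \<pi>$i) = \<rho> \<and>
      \<bar>\<Sum>x\<in>UNIV. (\<pi>$(x,False) + \<pi>$(x,True)) * (\<alpha>$(x,True) - \<alpha>$(x,False))\<bar> \<le> \<epsilon>}"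

text \<open>(n-1)-dimensional volume of a set V lying in a hyperplane with normal vector
  nv, defined (Cavalieri) as the Lebesgue measure of the unit-thickness slab
  swept by V along the unit normal.\<close>

definition hyp_volume :: "'a::euclidean_space \<Rightarrow> 'a set \<Rightarrow> real" where
  "hyp_volume nv V = measure lborel {a + t *\<^sub>R (nv /\<^sub>R norm nv) | a t. a \<in> V \<and> t \<in> {0..1}}"

end

theory Submission
  imports Defs
begin
lemma linear_measure_scale:
  fixes f :: "real^'n \<Rightarrow> real^'n"
  assumes "linear f"
  shows "\<exists>m\<ge>0. \<forall>S\<in>lmeasurable. f ` S \<in> lmeasurable \<and> measure lebesgue (f ` S) = m * measure lebesgue S"
proof (rule induct_linear_elementary [OF \<open>linear f\<close>])
  fix f g :: "real^'n \<Rightarrow> real^'n"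
  assume "linear f" "linear g"
    and f: "\<exists>m\<ge>0. \<forall>S\<in>lmeasurable. f ` S \<in> lmeasurable \<and> measure lebesgue (f ` S) = m * measure lebesgue S"
    and g: "\<exists>m\<ge>0. \<forall>S\<in>lmeasurable. g ` S \<in> lmeasurable \<and> measure lebesgue (g ` S) = m * measure lebesgue S"
  from f obtain a where a: "a \<ge> 0" "\<forall>S\<in>lmeasurable. f ` S \<in> lmeasurable \<and> measure lebesgue (f ` S) = a * measure lebesgue S" by blast
  from g obtain b where b: "b \<ge> 0" "\<forall>S\<in>lmeasurable. g ` S \<in> lmeasurable \<and> measure lebesgue (g ` S) = b * measure lebesgue S" by blast
  show "\<exists>m\<ge>0. \<forall>S\<in>lmeasurable. (f \<circ> g) ` S \<in> lmeasurable \<and> measure lebesgue ((f \<circ> g) ` S) = m * measure lebesgue S"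
  proof (rule exI[of _ "a*b"], intro conjI ballI)
    show "0 \<le> a*b" using a b by simp
    fix S :: "(real^'n) set" assume S: "S \<in> lmeasurable"
    have gS: "g ` S \<in> lmeasurable" using b S by blast
    have eq: "(f \<circ> g) ` S = f ` (g ` S)" by (simp add: image_comp)
    show "(f \<circ> g) ` S \<in> lmeasurable" using a gS eq by simp
    have "measure lebesgue (f ` (g ` S)) = a * measure lebesgue (g ` S)" using a(2) gS by blast
    also have "\<dots> = a * (b * measure lebesgue S)" using b(2) S by metis
    finally show "measure lebesgue ((f \<circ> g) ` S) = a * b * measure lebesgue S"
      using eq by simp
  qed
next
  fix f :: "real^'n \<Rightarrow> real^'n" and i
  assume "linear f" and 0: "\<And>x. f x $ i = 0"
  then have "\<not> inj f"
    by (metis (full_types) linear_injective_imp_surjective one_neq_zero surjE vec_component)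
  show "\<exists>m\<ge>0. \<forall>S\<in>lmeasurable. f ` S \<in> lmeasurable \<and> measure lebesgue (f ` S) = m * measure lebesgue S"
  proof (rule exI[of _ 0], intro conjI ballI order_refl)
    fix S :: "(real^'n) set" assume "S \<in> lmeasurable"
    show "f ` S \<in> lmeasurable"
      using lmeasurable_iff_indicator_has_integral \<open>linear f\<close> \<open>\<not> inj f\<close> negligible_UNIV negligible_linear_singular_image by blast
    show "measure lebesgue (f ` S) = 0 * measure lebesgue S"
      by (simp add: \<open>\<not> inj f\<close> \<open>linear f\<close> negligible_imp_measure0 negligible_linear_singular_image)
  qed
next
  fix c :: "'n \<Rightarrow> real"
  show "\<exists>m\<ge>0. \<forall>S\<in>lmeasurable. (\<lambda>a. \<chi> i. c i * a $ i) ` S \<in> lmeasurable \<and> measure lebesgue ((\<lambda>a. \<chi> i. c i * a $ i) ` S) = m * measure lebesgue S"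
    by (rule exI[of _ "\<bar>prod c UNIV\<bar>"]) (simp add: measurable_stretch measure_stretch)
next
  fix m :: "'n" and n :: "'n"
  assume "m \<noteq> n"
  let ?h = "\<lambda>v::(real, 'n) vec. \<chi> i. v $ Transposition.transpose m n i"
  have lin: "linear ?h"
    by (rule linearI) (simp_all add: plus_vec_def scaleR_vec_def)
  have meq: "measure lebesgue (?h ` cbox a b) = 1 * measure lebesgue (cbox a b)" for a b
  proof (cases "cbox a b = {}")
    case True then show ?thesis
      by simp
  next
    case False
    then have him: "?h ` (cbox a b) \<noteq> {}"
      by blast
    have eq: "?h ` (cbox a b) = cbox (?h a) (?h b)"
      by (auto simp: image_iff lambda_swap_Galois mem_box_cart) (metis transpose_involutory)+
    show ?thesis
      using him prod.permute [OF permutes_swap_id, where S=UNIV and g="\<lambda>i. (b - a)$i", symmetric]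
      by (simp add: eq content_cbox_cart False)
  qed
  show "\<exists>ma\<ge>0. \<forall>S\<in>lmeasurable. ?h ` S \<in> lmeasurable \<and> measure lebesgue (?h ` S) = ma * measure lebesgue S"
  proof (rule exI[of _ 1], intro conjI ballI)
    fix S :: "(real^'n) set" assume S: "S \<in> lmeasurable"
    from measure_linear_sufficient [OF lin S meq]
    show "?h ` S \<in> lmeasurable" "measure lebesgue (?h ` S) = 1 * measure lebesgue S" by auto
  qed simp
next
  fix m n :: "'n"
  assume "m \<noteq> n"
  let ?h = "\<lambda>v::(real, 'n) vec. \<chi> i. if i = m then v $ m + v $ n else v $ i"
  have lin: "linear ?h"
    by (rule linearI) (auto simp: algebra_simps plus_vec_def scaleR_vec_def vec_eq_iff)
  have meq: "measure lebesgue (?h ` (cbox a b)) = 1 * measure lebesgue (cbox a b)" for a b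
  proof (cases "cbox a b = {}")
    case True then show ?thesis by simp
  next
    case False
    then have ne: "(+) (\<chi> i. if i = n then - a $ n else 0) ` cbox a b \<noteq> {}"
      by auto
    let ?v = "\<chi> i. if i = n then - a $ n else 0"
    have "?h ` cbox a b
          = (+) (\<chi> i. if i = m \<or> i = n then a $ n else 0) ` ?h ` (+) ?v ` (cbox a b)"
      using \<open>m \<noteq> n\<close> unfolding image_comp o_def by (force simp: vec_eq_iff)
    then have "measure lebesgue (?h ` (cbox a b))
             = measure lebesgue ((\<lambda>v. \<chi> i. if i = m then v $ m + v $ n else v $ i) `
                                 (+) ?v ` cbox a b)"
      by (rule ssubst) (rule measure_translation)
    also have "\<dots> = measure lebesgue ((\<lambda>v. \<chi> i. if i = m then v $ m + v $ n else v $ i) ` cbox (?v +a) (?v + b))"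
      by (metis (no_types, lifting) cbox_translation)
    also have "\<dots> = measure lebesgue ((+) ?v ` cbox a b)"
      apply (subst measure_shear_interval)
      using \<open>m \<noteq> n\<close> ne apply auto
      apply (simp add: cbox_translation)
      by (metis cbox_borel cbox_translation measure_completion sets_lborel)
    also have "\<dots> = measure lebesgue (cbox a b)"
      by (rule measure_translation)
    finally show ?thesis by simp
  qed
  show "\<exists>ma\<ge>0. \<forall>S\<in>lmeasurable. ?h ` S \<in> lmeasurable \<and> measure lebesgue (?h ` S) = ma * measure lebesgue S"
  proof (rule exI[of _ 1], intro conjI ballI)
    fix S :: "(real^'n) set" assume S: "S \<in> lmeasurable"
    from measure_linear_sufficient [OF lin S meq]
    show "?h ` S \<in> lmeasurable" "measure lebesgue (?h ` S) = 1 * measure lebesgue S" by auto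
  qed simp
qed

lemma inj_measure_scale:
  fixes f :: "real^'n \<Rightarrow> real^'n"
  assumes "linear f" "inj f"
  shows "\<exists>m>0. \<forall>S\<in>lmeasurable. f ` S \<in> lmeasurable \<and> measure lebesgue (f ` S) = m * measure lebesgue S"
proof -
  obtain m where m: "m \<ge> 0" "\<forall>S\<in>lmeasurable. f ` S \<in> lmeasurable \<and> measure lebesgue (f ` S) = m * measure lebesgue S"
    using linear_measure_scale[OF assms(1)] by blast
  obtain h where "linear h" and hf: "\<And>x. h (f x) = x" and fh: "\<And>x. f (h x) = x"
    using assms linear_injective_isomorphism by blast
  obtain m' where m': "m' \<ge> 0" "\<forall>S\<in>lmeasurable. h ` S \<in> lmeasurable \<and> measure lebesgue (h ` S) = m' * measure lebesgue S"
    using linear_measure_scale[OF \<open>linear h\<close>] by blast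
  let ?S = "cbox 0 (One::real^'n)"
  have S1: "measure lebesgue ?S = 1"
    by (metis cbox_borel content_unit measure_completion sets_lborel)
  have hfS: "h ` (f ` ?S) = ?S" using hf by (force simp: image_iff)
  have fS: "f ` ?S \<in> lmeasurable" using m by blast
  have "measure lebesgue ?S = m' * (m * measure lebesgue ?S)"
    using m'(2) fS m(2) hfS by (metis lmeasurable_cbox)
  then have "m \<noteq> 0" using S1 by auto
  then show ?thesis using m by (intro exI[of _ m]) auto
qed

lemma sandwich:
  fixes G :: "real^'n \<Rightarrow> real^'n"
  assumes "linear G" "inj G"
  shows "\<exists>m>0. \<forall>S a1 b1 a2 b2. closed S \<longrightarrow> (\<forall>\<beta>\<in>S. G \<beta> \<in> cbox a2 b2) \<longrightarrow> (\<forall>\<beta>. G \<beta> \<in> cbox a1 b1 \<longrightarrow> \<beta> \<in> S) \<longrightarrow>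
     m * measure lebesgue (cbox a1 b1) \<le> measure lborel S \<and> measure lborel S \<le> m * measure lebesgue (cbox a2 b2)"
proof -
  obtain D where D: "D > 0" "\<forall>S\<in>lmeasurable. G ` S \<in> lmeasurable \<and> measure lebesgue (G ` S) = D * measure lebesgue S"
    using inj_measure_scale[OF assms] by blast
  obtain h where "linear h" and hf: "\<And>x. h (G x) = x" and fh: "\<And>x. G (h x) = x"
    using assms linear_injective_isomorphism by blast
  show ?thesis
  proof (rule exI[of _ "1/D"], intro conjI allI impI)
    show "0 < 1/D" using D by simp
    fix S a1 b1 a2 b2
    assume cl: "closed S" and up: "\<forall>\<beta>\<in>S. G \<beta> \<in> cbox a2 b2" and lo: "\<forall>\<beta>. G \<beta> \<in> cbox a1 b1 \<longrightarrow> \<beta> \<in> S"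
    have sub: "S \<subseteq> h ` cbox a2 b2" using up hf by (metis image_eqI subsetI)
    have "bounded (h ` cbox a2 b2)"
      using \<open>linear h\<close> bounded_cbox bounded_linear_image linear_linear by blast
    then have bS: "bounded S" using sub bounded_subset by blast
    have Sb: "S \<in> sets lborel" using cl by (simp add: borel_closed)
    then have Sl: "S \<in> sets lebesgue" by simp
    have SL: "S \<in> lmeasurable" using bS Sl bounded_set_imp_lmeasurable by blast
    have eqm: "measure lborel S = measure lebesgue S" using Sb by simp
    have GS: "G ` S \<in> lmeasurable" "measure lebesgue (G ` S) = D * measure lebesgue S" using D SL by auto
    have "G ` S \<subseteq> cbox a2 b2" using up by blast
    then have "measure lebesgue (G ` S) \<le> measure lebesgue (cbox a2 b2)"
      using GS by (intro measure_mono_fmeasurable) (auto intro: fmeasurableD)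
    then have u: "D * measure lebesgue S \<le> measure lebesgue (cbox a2 b2)" using GS by simp
    have "cbox a1 b1 \<subseteq> G ` S"
    proof
      fix y assume "y \<in> cbox a1 b1"
      then have "h y \<in> S" using lo fh by metis
      then show "y \<in> G ` S" using fh by (metis image_eqI)
    qed
    then have "measure lebesgue (cbox a1 b1) \<le> measure lebesgue (G ` S)"
      using GS by (intro measure_mono_fmeasurable) (auto intro: fmeasurableD)
    then have l: "measure lebesgue (cbox a1 b1) \<le> D * measure lebesgue S" using GS by simp
    show "1/D * measure lebesgue (cbox a1 b1) \<le> measure lborel S"
      using l D eqm by (simp add: field_simps)
    show "measure lborel S \<le> 1/D * measure lebesgue (cbox a2 b2)"
      using u D eqm by (simp add: field_simps)
  qed
qed

lemma measure_box_w:
  fixes a w :: "real^'n"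
  assumes "\<And>i. w$i \<ge> 0"
  shows "measure lebesgue (cbox a (a + w)) = (\<Prod>i\<in>UNIV. w$i)"
proof -
  have "a \<in> cbox a (a + w)" using assms by (simp add: mem_box_cart)
  then have ne: "cbox a (a + w) \<noteq> {}" by blast
  have "measure lebesgue (cbox a (a + w)) = measure lborel (cbox a (a + w))"
    by (metis cbox_borel measure_completion sets_lborel)
  also have "\<dots> = (\<Prod>i\<in>UNIV. w$i)" using ne by (simp add: content_cbox_cart)
  finally show ?thesis .
qed

lemma mem_box_w: "(y::real^'n) \<in> cbox a (a + w) \<longleftrightarrow> (\<forall>i. a$i \<le> y$i \<and> y$i \<le> a$i + w$i)"
  by (simp add: mem_box_cart)

lemma sum_pairs:
  "(\<Sum>i\<in>(UNIV::('a::finite\<times>bool) set). f i) = (\<Sum>x\<in>UNIV. f (x,False) + f (x,True))"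
  unfolding UNIV_Times_UNIV[symmetric] sum.cartesian_product' by (simp add: UNIV_bool add.commute)

lemma prod_pairs:
  "(\<Prod>i\<in>(UNIV::('a::finite\<times>bool) set). f i) = (\<Prod>x\<in>UNIV. f (x,False) * f (x,True))"
  unfolding UNIV_Times_UNIV[symmetric] prod.cartesian_product' by (simp add: UNIV_bool mult.commute)

lemma prod_if1:
  fixes A B :: real
  shows "(\<Prod>x\<in>(UNIV::'a::finite set). if x = a then A else B) = A * B ^ (CARD('a) - 1)"
proof -
  have "(\<Prod>x\<in>UNIV. if x = a then A else B) = (if a = a then A else B) * (\<Prod>x\<in>UNIV-{a}. if x = a then A else B)"
    by (rule prod.remove) auto
  also have "(\<Prod>x\<in>UNIV-{a}. if x = a then A else B) = (\<Prod>x\<in>UNIV-{a}. B)"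
    by (rule prod.cong) auto
  also have "\<dots> = B ^ (CARD('a) - 1)" by (simp add: card_Diff_singleton)
  finally show ?thesis by simp
qed

lemma prod_if2:
  fixes A B C :: real
  assumes "a \<noteq> b"
  shows "(\<Prod>x\<in>(UNIV::'a::finite set). if x = a then A else if x = b then B else C) = A * B * C ^ (CARD('a) - 2)"
proof -
  let ?f = "\<lambda>x. if x = a then A else if x = b then B else C"
  have "(\<Prod>x\<in>UNIV. ?f x) = ?f a * (\<Prod>x\<in>UNIV-{a}. ?f x)"
    by (rule prod.remove) auto
  also have "(\<Prod>x\<in>UNIV-{a}. ?f x) = ?f b * (\<Prod>x\<in>UNIV-{a}-{b}. ?f x)"
    by (rule prod.remove) (use assms in auto)
  also have "(\<Prod>x\<in>UNIV-{a}-{b}. ?f x) = (\<Prod>x\<in>UNIV-{a}-{b}. C)"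
    by (rule prod.cong) auto
  also have "\<dots> = C ^ (CARD('a) - 2)" using assms by (simp add: card_Diff_singleton numeral_2_eq_2)
  finally show ?thesis using assms by (simp add: numeral_2_eq_2)
qed

lemma inner_vec_real: "inner (x::real^'n) y = (\<Sum>i\<in>UNIV. x$i * y$i)"
  by (simp add: inner_vec_def)

lemma slab_char:
  fixes \<pi> :: "'a::euclidean_space"
  assumes "\<pi> \<noteq> 0" and V: "\<And>a. a \<in> V \<Longrightarrow> inner a \<pi> = \<rho>"
  shows "\<beta> \<in> {a + t *\<^sub>R (\<pi> /\<^sub>R norm \<pi>) | a t. a \<in> V \<and> t \<in> {0..1}} \<longleftrightarrow>
    \<rho> \<le> inner \<beta> \<pi> \<and> inner \<beta> \<pi> \<le> \<rho> + norm \<pi> \<and> \<beta> - ((inner \<beta> \<pi> - \<rho>) / (norm \<pi>)^2) *\<^sub>R \<pi> \<in> V"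
proof -
  have n: "norm \<pi> > 0" using assms by simp
  have ip: "inner \<pi> \<pi> = (norm \<pi>)^2" by (simp add: power2_norm_eq_inner)
  show ?thesis
  proof
    assume "\<beta> \<in> {a + t *\<^sub>R (\<pi> /\<^sub>R norm \<pi>) | a t. a \<in> V \<and> t \<in> {0..1}}"
    then obtain a t where b: "\<beta> = a + t *\<^sub>R (\<pi> /\<^sub>R norm \<pi>)" "a \<in> V" "t \<in> {0..1}" by blast
    have i: "inner \<beta> \<pi> = \<rho> + t * norm \<pi>"
      using b V[of a] n by (simp add: inner_add_left ip power2_eq_square)
    have e0: "\<beta> - ((t * norm \<pi>) / (norm \<pi>)^2) *\<^sub>R \<pi> = a"
      using b n by (simp add: power2_eq_square divide_inverse)
    have e: "\<beta> - ((inner \<beta> \<pi> - \<rho>) / (norm \<pi>)^2) *\<^sub>R \<pi> \<in> V"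
      using e0 i b(2) by simp
    have "t * norm \<pi> \<le> norm \<pi>" using b(3) n by (simp add: mult_le_cancel_right2)
    moreover have "0 \<le> t * norm \<pi>" using b(3) by simp
    ultimately show "\<rho> \<le> inner \<beta> \<pi> \<and> inner \<beta> \<pi> \<le> \<rho> + norm \<pi> \<and> \<beta> - ((inner \<beta> \<pi> - \<rho>) / (norm \<pi>)^2) *\<^sub>R \<pi> \<in> V"
      using i e by simp
  next
    assume h: "\<rho> \<le> inner \<beta> \<pi> \<and> inner \<beta> \<pi> \<le> \<rho> + norm \<pi> \<and> \<beta> - ((inner \<beta> \<pi> - \<rho>) / (norm \<pi>)^2) *\<^sub>R \<pi> \<in> V"
    let ?t = "(inner \<beta> \<pi> - \<rho>) / norm \<pi>"
    have "\<beta> = (\<beta> - ((inner \<beta> \<pi> - \<rho>) / (norm \<pi>)^2) *\<^sub>R \<pi>) + ?t *\<^sub>R (\<pi> /\<^sub>R norm \<pi>)"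
      using n by (simp add: power2_eq_square divide_inverse)
    moreover have "?t \<in> {0..1}" using h n by (auto simp: field_simps)
    ultimately show "\<beta> \<in> {a + t *\<^sub>R (\<pi> /\<^sub>R norm \<pi>) | a t. a \<in> V \<and> t \<in> {0..1}}"
      using h by blast
  qed
qed

lemma sum_single: "(\<And>x. x \<noteq> a \<Longrightarrow> f x = 0) \<Longrightarrow> (\<Sum>x\<in>(UNIV::'a::finite set). f x) = (f a::real)"
  by (subst sum.remove[of UNIV a]) (auto intro: sum.neutral)

lemma sum_remove_real: "(\<Sum>x\<in>(UNIV::'a::finite set). f x) = (f a::real) + (\<Sum>x\<in>UNIV-{a}. f x)"
  by (rule sum.remove) auto

locale polset =
  fixes \<pi> :: "real^('x::finite \<times> bool)" and \<rho> :: real and x0 :: 'x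
  assumes pos: "\<forall>i. \<pi>$i > 0" and s1: "(\<Sum>i\<in>UNIV. \<pi>$i) = 1" and r0: "0 < \<rho>" and r1: "\<rho> < 1"
begin

definition "P x = \<pi>$(x,False) + \<pi>$(x,True)"
definition "mm = min \<rho> (1 - \<rho>)"

lemma P_pos: "P x > 0" using pos by (simp add: P_def add_pos_pos)
lemma sumP: "(\<Sum>x\<in>UNIV. P x) = 1" using s1 by (simp add: P_def sum_pairs)
lemma P_le1: "P x \<le> 1"
proof -
  have "P x \<le> (\<Sum>x\<in>UNIV. P x)" by (rule member_le_sum) (auto intro: less_imp_le P_pos)
  then show ?thesis using sumP by simp
qed
lemma mm_pos: "mm > 0" using r0 r1 by (simp add: mm_def)

lemma sum_abs_bound:
  fixes f g :: "'x \<Rightarrow> real"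
  assumes "\<And>x. x \<in> A \<Longrightarrow> \<bar>f x\<bar> \<le> g x"
  shows "\<bar>\<Sum>x\<in>A. f x\<bar> \<le> (\<Sum>x\<in>A. g x)"
  by (metis (no_types, lifting) assms order_trans sum_abs sum_mono)

lemma sumP_sub: "(\<Sum>x\<in>A. P x) \<le> 1"
proof -
  have "(\<Sum>x\<in>A. P x) \<le> (\<Sum>x\<in>UNIV. P x)"
    by (rule sum_mono2) (auto intro: less_imp_le P_pos)
  then show ?thesis using sumP by simp
qed

lemma fair_point:
  fixes \<alpha> :: "real^('x \<times> bool)"
  assumes hyp: "(\<Sum>i\<in>UNIV. \<alpha>$i * \<pi>$i) = \<rho>"
    and d: "\<forall>x. \<bar>\<alpha>$(x,True) - \<alpha>$(x,False)\<bar> \<le> \<epsilon>"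
    and e: "\<forall>x. x \<noteq> x0 \<longrightarrow> \<bar>\<alpha>$(x,False) - \<rho>\<bar> \<le> e0"
    and "0 \<le> \<epsilon>" "\<epsilon> \<le> e0" and e0: "e0 = P x0 * mm / 3"
  shows "\<forall>i. 0 \<le> \<alpha>$i \<and> \<alpha>$i \<le> 1"
proof -
  define dd where "dd x = \<alpha>$(x,True) - \<alpha>$(x,False)" for x
  define ee where "ee x = \<alpha>$(x,False) - \<rho>" for x
  have "(\<Sum>x\<in>UNIV. P x * ee x + \<pi>$(x,True) * dd x) = (\<Sum>x\<in>UNIV. (\<alpha>$(x,False) * \<pi>$(x,False) + \<alpha>$(x,True) * \<pi>$(x,True)) - \<rho> * P x)"
    by (rule sum.cong) (auto simp: P_def ee_def dd_def algebra_simps)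
  also have "\<dots> = \<rho> - \<rho> * 1"
    using hyp sumP by (simp add: sum_subtractf sum_distrib_left[symmetric] sum_pairs)
  finally have eq0: "(\<Sum>x\<in>UNIV. P x * ee x + \<pi>$(x,True) * dd x) = 0" by simp
  have split: "(\<Sum>x\<in>UNIV. P x * ee x) = P x0 * ee x0 + (\<Sum>x\<in>UNIV-{x0}. P x * ee x)"
    by (rule sum_remove_real)
  have b1: "\<bar>\<Sum>x\<in>UNIV-{x0}. P x * ee x\<bar> \<le> (\<Sum>x\<in>UNIV-{x0}. P x * e0)"
    apply (rule sum_abs_bound)
    subgoal for x using e P_pos[of x] by (simp add: ee_def abs_mult mult_left_mono)
    done
  have b1': "(\<Sum>x\<in>UNIV-{x0}. P x * e0) \<le> e0"
  proof -
    have "0 \<le> P x0 * mm" using P_pos[of x0] mm_pos by simp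
    then have e0pos: "0 \<le> e0" using e0 by simp
    have "(\<Sum>x\<in>UNIV-{x0}. P x * e0) = (\<Sum>x\<in>UNIV-{x0}. P x) * e0" by (simp add: sum_distrib_right)
    also have "\<dots> \<le> 1 * e0" by (rule mult_right_mono[OF sumP_sub e0pos])
    finally show ?thesis by simp
  qed
  have b2: "\<bar>\<Sum>x\<in>UNIV. \<pi>$(x,True) * dd x\<bar> \<le> (\<Sum>x\<in>UNIV. P x * \<epsilon>)"
    apply (rule sum_abs_bound)
  proof -
    fix x
    have p: "0 < \<pi>$(x,True)" "0 < \<pi>$(x,False)" using pos by auto
    have "\<bar>\<pi>$(x,True) * dd x\<bar> = \<pi>$(x,True) * \<bar>dd x\<bar>" using p by (simp add: abs_mult)
    also have "\<dots> \<le> \<pi>$(x,True) * \<epsilon>" using d p by (simp add: dd_def mult_left_mono)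
    also have "\<dots> \<le> P x * \<epsilon>" using p \<open>0 \<le> \<epsilon>\<close> by (simp add: P_def mult_right_mono)
    finally show "\<bar>\<pi>$(x,True) * dd x\<bar> \<le> P x * \<epsilon>" .
  qed
  have b2': "(\<Sum>x\<in>UNIV. P x * \<epsilon>) = \<epsilon>" using sumP by (simp add: sum_distrib_right[symmetric])
  have "P x0 * ee x0 = - (\<Sum>x\<in>UNIV-{x0}. P x * ee x) - (\<Sum>x\<in>UNIV. \<pi>$(x,True) * dd x)"
    using eq0 split by (simp add: sum.distrib)
  then have "\<bar>P x0 * ee x0\<bar> \<le> e0 + \<epsilon>" using b1 b1' b2 b2' by linarith
  moreover have "e0 + \<epsilon> \<le> P x0 * (2 * mm / 3)" using e0 \<open>\<epsilon> \<le> e0\<close> by (simp add: mult.commute)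
  moreover have "\<bar>P x0 * ee x0\<bar> = P x0 * \<bar>ee x0\<bar>" using P_pos[of x0] by (simp add: abs_mult)
  ultimately have "P x0 * \<bar>ee x0\<bar> \<le> P x0 * (2 * mm / 3)" by linarith
  then have ex0: "\<bar>ee x0\<bar> \<le> 2 * mm / 3" using P_pos[of x0] by simp
  have e0le: "e0 \<le> mm / 3" using e0 P_le1[of x0] mm_pos by (simp add: mult_le_cancel_right1)
  have eall: "\<bar>ee x\<bar> \<le> 2 * mm / 3" for x
    using ex0 e e0le mm_pos by (cases "x = x0") (auto simp: ee_def)
  have dall: "\<bar>dd x\<bar> \<le> mm / 3" for x using d[rule_format, of x] \<open>\<epsilon> \<le> e0\<close> e0le unfolding dd_def by linarith
  have mm: "mm \<le> \<rho>" "mm \<le> 1 - \<rho>" by (auto simp: mm_def)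
  show ?thesis
  proof
    fix i :: "'x \<times> bool"
    obtain x b where i: "i = (x,b)" by fastforce
    have a1: "- (2 * mm / 3) \<le> ee x \<and> ee x \<le> 2 * mm / 3" using eall[of x] unfolding abs_le_iff by linarith
    have a2: "- (mm / 3) \<le> dd x \<and> dd x \<le> mm / 3" using dall[of x] unfolding abs_le_iff by linarith
    have F: "0 \<le> \<alpha>$(x,False) \<and> \<alpha>$(x,False) \<le> 1" using a1 mm unfolding ee_def by linarith
    have T: "0 \<le> \<alpha>$(x,True) \<and> \<alpha>$(x,True) \<le> 1" using a1 a2 mm unfolding ee_def dd_def by linarith
    show "0 \<le> \<alpha>$i \<and> \<alpha>$i \<le> 1" using F T i by (cases b) auto
  qed
qed

lemma mask_point:
  fixes \<alpha> :: "real^('x \<times> bool)"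
  assumes hyp: "(\<Sum>i\<in>UNIV. \<alpha>$i * \<pi>$i) = \<rho>"
    and D: "\<bar>\<Sum>x\<in>UNIV. P x * (\<alpha>$(x,True) - \<alpha>$(x,False))\<bar> \<le> \<epsilon>"
    and e: "\<forall>i. fst i \<noteq> x0 \<longrightarrow> \<bar>\<alpha>$i - \<rho>\<bar> \<le> e0"
    and "0 \<le> \<epsilon>" "\<epsilon> \<le> e0" and e0: "e0 = (P x0)^2 * mm / 8"
  shows "\<forall>i. 0 \<le> \<alpha>$i \<and> \<alpha>$i \<le> 1"
proof -
  define ee where "ee i = \<alpha>$i - \<rho>" for i
  define dd where "dd x = \<alpha>$(x,True) - \<alpha>$(x,False)" for x
  define g where "g x = \<pi>$(x,False) * ee (x,False) + \<pi>$(x,True) * ee (x,True)" for x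
  define p where "p = P x0"
  have pp: "0 < p" "p \<le> 1" using P_pos P_le1 by (auto simp: p_def)
  have "0 \<le> (P x0)^2 * mm" using mm_pos by simp
  then have e0pos: "0 \<le> e0" using e0 by simp
  have "(\<Sum>i\<in>UNIV. \<pi>$i * ee i) = (\<Sum>i\<in>UNIV. \<alpha>$i * \<pi>$i - \<rho> * \<pi>$i)"
    by (rule sum.cong) (auto simp: ee_def algebra_simps)
  also have "\<dots> = \<rho> - \<rho> * 1" using hyp s1 by (simp add: sum_subtractf sum_distrib_left[symmetric])
  finally have "(\<Sum>i\<in>UNIV. \<pi>$i * ee i) = 0" by simp
  then have "(\<Sum>x\<in>UNIV. g x) = 0" by (simp add: sum_pairs g_def)
  then have r0: "g x0 = - (\<Sum>x\<in>UNIV-{x0}. g x)" using sum_remove_real[of g x0] by simp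
  have "\<bar>\<Sum>x\<in>UNIV-{x0}. g x\<bar> \<le> (\<Sum>x\<in>UNIV-{x0}. P x * e0)"
  proof (rule sum_abs_bound)
    fix x assume x: "x \<in> UNIV-{x0}"
    have p: "0 < \<pi>$(x,True)" "0 < \<pi>$(x,False)" using pos by auto
    have "\<bar>ee (x,False)\<bar> \<le> e0" "\<bar>ee (x,True)\<bar> \<le> e0" using e x by (auto simp: ee_def)
    then have "\<bar>\<pi>$(x,False) * ee (x,False)\<bar> \<le> \<pi>$(x,False) * e0" "\<bar>\<pi>$(x,True) * ee (x,True)\<bar> \<le> \<pi>$(x,True) * e0"
      using p by (auto simp: abs_mult mult_left_mono)
    then show "\<bar>g x\<bar> \<le> P x * e0" unfolding g_def P_def using abs_triangle_ineq[of "\<pi>$(x,False) * ee (x,False)" "\<pi>$(x,True) * ee (x,True)"] by (simp add: distrib_right)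
  qed
  also have "(\<Sum>x\<in>UNIV-{x0}. P x * e0) = (\<Sum>x\<in>UNIV-{x0}. P x) * e0" by (simp add: sum_distrib_right)
  also have "\<dots> \<le> 1 * e0" by (rule mult_right_mono[OF sumP_sub e0pos])
  finally have rb: "\<bar>g x0\<bar> \<le> e0" using r0 by simp
  have "\<bar>\<Sum>x\<in>UNIV-{x0}. P x * dd x\<bar> \<le> (\<Sum>x\<in>UNIV-{x0}. P x * (2 * e0))"
  proof (rule sum_abs_bound)
    fix x assume x: "x \<in> UNIV-{x0}"
    have "\<bar>ee (x,False)\<bar> \<le> e0" "\<bar>ee (x,True)\<bar> \<le> e0" using e x by (auto simp: ee_def)
    then have "\<bar>dd x\<bar> \<le> 2 * e0" unfolding dd_def ee_def by linarith
    then show "\<bar>P x * dd x\<bar> \<le> P x * (2 * e0)" using P_pos[of x] by (simp add: abs_mult mult_left_mono)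
  qed
  also have "(\<Sum>x\<in>UNIV-{x0}. P x * (2 * e0)) = (\<Sum>x\<in>UNIV-{x0}. P x) * (2 * e0)" by (simp add: sum_distrib_right)
  also have "\<dots> \<le> 1 * (2 * e0)" using e0pos by (intro mult_right_mono[OF sumP_sub]) simp
  finally have db: "\<bar>\<Sum>x\<in>UNIV-{x0}. P x * dd x\<bar> \<le> 2 * e0" by simp
  have "(\<Sum>x\<in>UNIV. P x * dd x) = P x0 * dd x0 + (\<Sum>x\<in>UNIV-{x0}. P x * dd x)" by (rule sum_remove_real)
  then have sb: "\<bar>p * dd x0\<bar> \<le> 3 * e0" using D db \<open>\<epsilon> \<le> e0\<close> unfolding dd_def p_def by linarith
  define a where "a = ee (x0,False)"
  define b where "b = ee (x0,True)"
  have dab: "dd x0 = b - a" by (simp add: a_def b_def dd_def ee_def)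
  have pdef: "p = \<pi>$(x0,False) + \<pi>$(x0,True)" by (simp add: p_def P_def)
  have key: "p * p * a = p * g x0 - \<pi>$(x0,True) * (p * dd x0)"
    unfolding dab g_def a_def[symmetric] b_def[symmetric] pdef by (simp add: algebra_simps)
  have pF: "0 < \<pi>$(x0,False)" using pos by auto
  have piT0: "0 < \<pi>$(x0,True)" using pos by auto
  have piT: "0 < \<pi>$(x0,True)" "\<pi>$(x0,True) \<le> 1" using piT0 apply simp using pdef pp pF by linarith
  have "p * \<bar>g x0\<bar> \<le> 1 * e0" by (rule mult_mono[OF pp(2) rb]) auto
  then have f1: "\<bar>p * g x0\<bar> \<le> e0" using pp by (simp add: abs_mult)
  have "\<pi>$(x0,True) * \<bar>p * dd x0\<bar> \<le> 1 * (3 * e0)" by (rule mult_mono[OF piT(2) sb]) auto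
  then have f2: "\<bar>\<pi>$(x0,True) * (p * dd x0)\<bar> \<le> 3 * e0" using piT by (simp add: abs_mult)
  have e0p: "e0 = p * p * mm / 8" using e0 by (simp add: p_def power2_eq_square)
  have "\<bar>p * p * a\<bar> \<le> 4 * e0" using key f1 f2 by linarith
  then have "p * p * \<bar>a\<bar> \<le> p * p * (mm / 2)" using pp e0p by (simp add: abs_mult)
  then have ab: "\<bar>a\<bar> \<le> mm / 2" using pp by (simp add: mult_le_cancel_left_pos)
  have "p * \<bar>dd x0\<bar> \<le> p * (3 * p * mm / 8)" using sb pp e0p by (simp add: abs_mult)
  then have "\<bar>dd x0\<bar> \<le> 3 * p * mm / 8" using pp by (simp add: mult_le_cancel_left_pos)
  also have "\<dots> \<le> 3 * mm / 8" using pp mm_pos by (simp add: mult_le_cancel_right1)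
  finally have "\<bar>dd x0\<bar> \<le> 3 * mm / 8" .
  then have bb: "\<bar>b\<bar> \<le> 7 * mm / 8" using ab dab by linarith
  have "p * p \<le> 1 * 1" using pp by (intro mult_mono) auto
  then have "e0 \<le> mm / 8" using e0p mm_pos by (simp add: mult_le_cancel_right1)
  then have eo: "\<forall>i. fst i \<noteq> x0 \<longrightarrow> \<bar>ee i\<bar> \<le> 7 * mm / 8"
  proof (intro allI impI)
    fix i :: "'x \<times> bool" assume "fst i \<noteq> x0" "e0 \<le> mm / 8"
    then have "\<bar>\<alpha>$i - \<rho>\<bar> \<le> e0" using e by blast
    then show "\<bar>ee i\<bar> \<le> 7 * mm / 8" using \<open>e0 \<le> mm / 8\<close> mm_pos unfolding ee_def by linarith
  qed
  have mm: "mm \<le> \<rho>" "mm \<le> 1 - \<rho>" by (auto simp: mm_def)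
  have all: "\<bar>ee i\<bar> \<le> 7 * mm / 8" for i
  proof -
    obtain x c where i: "i = (x,c)" by fastforce
    show ?thesis
    proof (cases "x = x0")
      case True then show ?thesis using ab bb mm_pos i by (cases c) (auto simp: a_def b_def)
    next
      case False then show ?thesis using eo i by auto
    qed
  qed
  show ?thesis
  proof
    fix i
    have "- (7 * mm / 8) \<le> ee i \<and> ee i \<le> 7 * mm / 8" using all[of i] unfolding abs_le_iff by linarith
    then show "0 \<le> \<alpha>$i \<and> \<alpha>$i \<le> 1" using mm mm_pos unfolding ee_def by linarith
  qed
qed

end

context polset begin

definition "nq = (norm \<pi>)^2"
definition "alph \<beta> = \<beta> - ((inner \<beta> \<pi> - \<rho>) / nq) *\<^sub>R \<pi>"

lemma pi_nz: "\<pi> \<noteq> 0" using pos by (metis zero_index less_irrefl)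
lemma nq_pos: "nq > 0" using pi_nz by (simp add: nq_def)
lemma inner_pp: "inner \<pi> \<pi> = nq" by (simp add: nq_def power2_norm_eq_inner)

lemma alph_nth: "alph \<beta> $ i = \<beta>$i - (inner \<beta> \<pi> - \<rho>) / nq * \<pi>$i"
  by (simp add: alph_def)

lemma alph_inner: "inner (alph \<beta>) \<pi> = \<rho>"
  using nq_pos by (simp add: alph_def inner_diff_left inner_pp)

lemma alph_sum: "(\<Sum>i\<in>UNIV. alph \<beta> $ i * \<pi>$i) = \<rho>"
  using alph_inner by (simp add: inner_vec_real)

lemma inner_pairs: "inner \<beta> \<pi> = (\<Sum>x\<in>UNIV. \<beta>$(x,False) * \<pi>$(x,False) + \<beta>$(x,True) * \<pi>$(x,True))"
  by (simp add: inner_vec_real sum_pairs)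

definition "Gf \<beta> = (\<chi> i. if i = (x0,False) then inner \<beta> \<pi>
   else if snd i then (\<beta>$(fst i,True) - \<beta>$(fst i,False)) - inner \<beta> \<pi> / nq * (\<pi>$(fst i,True) - \<pi>$(fst i,False))
   else \<beta>$i - inner \<beta> \<pi> / nq * \<pi>$i)"

definition "mf \<beta> x = P x * ((\<beta>$(x,True) - \<beta>$(x,False)) - inner \<beta> \<pi> / nq * (\<pi>$(x,True) - \<pi>$(x,False)))"

lemma mf_add: "mf (b1 + b2) x = mf b1 x + mf b2 x"
  by (simp add: mf_def inner_add_left algebra_simps add_divide_distrib)
lemma mf_scale: "mf (c *\<^sub>R b) x = c * mf b x"
  by (simp add: mf_def algebra_simps)

definition "Gm \<beta> = (\<chi> i. if i = (x0,False) then inner \<beta> \<pi>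
   else if i = (x0,True) then (\<Sum>x\<in>UNIV. mf \<beta> x)
   else \<beta>$i - inner \<beta> \<pi> / nq * \<pi>$i)"

lemma Gf_linear: "linear Gf"
  by (rule linearI) (auto simp: Gf_def vec_eq_iff inner_add_left algebra_simps add_divide_distrib)

lemma Gm_linear: "linear Gm"
  by (rule linearI) (auto simp: Gm_def vec_eq_iff inner_add_left algebra_simps add_divide_distrib sum.distrib sum_distrib_left mf_add mf_scale)

lemma Gf_inj: "inj Gf"
  unfolding linear_injective_0[OF Gf_linear]
proof (intro allI impI)
  fix \<beta> assume "Gf \<beta> = 0"
  then have c: "Gf \<beta> $ i = 0" for i by simp
  have h0: "inner \<beta> \<pi> = 0" using c[of "(x0,False)"] by (simp add: Gf_def)
  have hT: "\<beta>$(x,True) = \<beta>$(x,False)" for x using c[of "(x,True)"] h0 by (simp add: Gf_def)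
  have hF: "\<beta>$(x,False) = 0" if "x \<noteq> x0" for x using c[of "(x,False)"] h0 that by (simp add: Gf_def)
  have "inner \<beta> \<pi> = \<beta>$(x0,False) * \<pi>$(x0,False) + \<beta>$(x0,True) * \<pi>$(x0,True)"
    unfolding inner_pairs by (rule sum_single) (simp add: hT hF)
  then have "\<beta>$(x0,False) * P x0 = 0" using h0 hT[of x0] by (simp add: P_def algebra_simps)
  then have z0: "\<beta>$(x0,False) = 0" using P_pos[of x0] by simp
  have "\<beta>$i = 0" for i
  proof -
    obtain x b where i: "i = (x,b)" by fastforce
    show "\<beta>$i = 0" using i z0 hT hF by (cases b; cases "x = x0") auto
  qed
  then show "\<beta> = 0" by (simp add: vec_eq_iff)
qed

lemma Gm_inj: "inj Gm"
  unfolding linear_injective_0[OF Gm_linear]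
proof (intro allI impI)
  fix \<beta> assume "Gm \<beta> = 0"
  then have c: "Gm \<beta> $ i = 0" for i by simp
  have h0: "inner \<beta> \<pi> = 0" using c[of "(x0,False)"] by (simp add: Gm_def)
  have hO: "\<beta>$(x,b) = 0" if "x \<noteq> x0" for x b using c[of "(x,b)"] h0 that by (simp add: Gm_def)
  have "(\<Sum>x\<in>UNIV. P x * (\<beta>$(x,True) - \<beta>$(x,False))) = 0" using c[of "(x0,True)"] h0 by (simp add: Gm_def mf_def)
  moreover have "(\<Sum>x\<in>UNIV. P x * (\<beta>$(x,True) - \<beta>$(x,False))) = P x0 * (\<beta>$(x0,True) - \<beta>$(x0,False))"
    by (rule sum_single) (simp add: hO)
  ultimately have "\<beta>$(x0,True) = \<beta>$(x0,False)" using P_pos[of x0] by simp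
  moreover have "inner \<beta> \<pi> = \<beta>$(x0,False) * \<pi>$(x0,False) + \<beta>$(x0,True) * \<pi>$(x0,True)"
    unfolding inner_pairs by (rule sum_single) (simp add: hO)
  ultimately have "\<beta>$(x0,False) * P x0 = 0" using h0 by (simp add: P_def algebra_simps)
  then have z0: "\<beta>$(x0,False) = 0" using P_pos[of x0] by simp
  have "\<beta>$i = 0" for i
  proof -
    obtain x b where i: "i = (x,b)" by fastforce
    show "\<beta>$i = 0" using i z0 hO \<open>\<beta>$(x0,True) = \<beta>$(x0,False)\<close> by (cases b; cases "x = x0") auto
  qed
  then show "\<beta> = 0" by (simp add: vec_eq_iff)
qed

lemma Gf_T: "Gf \<beta> $ (x,True) = (alph \<beta> $ (x,True) - alph \<beta> $ (x,False)) - \<rho> / nq * (\<pi>$(x,True) - \<pi>$(x,False))"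
  by (simp add: Gf_def alph_nth diff_divide_distrib algebra_simps)

lemma Gf_F: "x \<noteq> x0 \<Longrightarrow> Gf \<beta> $ (x,False) = alph \<beta> $ (x,False) - \<rho> / nq * \<pi>$(x,False)"
  by (simp add: Gf_def alph_nth diff_divide_distrib algebra_simps)

lemma Gf_0: "Gf \<beta> $ (x0,False) = inner \<beta> \<pi>"
  by (simp add: Gf_def)

definition "km = \<rho> / nq * (\<Sum>x\<in>UNIV. P x * (\<pi>$(x,True) - \<pi>$(x,False)))"

lemma Gm_T: "Gm \<beta> $ (x0,True) = (\<Sum>x\<in>UNIV. P x * (alph \<beta> $ (x,True) - alph \<beta> $ (x,False))) - km"
proof -
  have "Gm \<beta> $ (x0,True) = (\<Sum>x\<in>UNIV. P x * (alph \<beta> $ (x,True) - alph \<beta> $ (x,False)) - \<rho> / nq * (P x * (\<pi>$(x,True) - \<pi>$(x,False))))"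
    by (simp add: Gm_def mf_def alph_nth diff_divide_distrib algebra_simps)
  also have "\<dots> = (\<Sum>x\<in>UNIV. P x * (alph \<beta> $ (x,True) - alph \<beta> $ (x,False))) - km"
    by (simp add: sum_subtractf km_def sum_distrib_left)
  finally show ?thesis .
qed

lemma Gm_O: "fst i \<noteq> x0 \<Longrightarrow> Gm \<beta> $ i = alph \<beta> $ i - \<rho> / nq * \<pi>$i"
  by (auto simp: Gm_def alph_nth diff_divide_distrib algebra_simps)

lemma Gm_0: "Gm \<beta> $ (x0,False) = inner \<beta> \<pi>"
  by (simp add: Gm_def)

end

context polset begin

definition "slab V = {a + t *\<^sub>R (\<pi> /\<^sub>R norm \<pi>) | a t. a \<in> V \<and> t \<in> {0..1}}"

lemma slab_iff:
  assumes "\<And>a. a \<in> V \<Longrightarrow> inner a \<pi> = \<rho>"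
  shows "\<beta> \<in> slab V \<longleftrightarrow> \<rho> \<le> inner \<beta> \<pi> \<and> inner \<beta> \<pi> \<le> \<rho> + norm \<pi> \<and> alph \<beta> \<in> V"
  unfolding slab_def alph_def nq_def by (rule slab_char[OF pi_nz assms])

lemma Vfair_on: "a \<in> Vfair \<pi> \<rho> \<epsilon> \<Longrightarrow> inner a \<pi> = \<rho>"
  by (simp add: Vfair_def inner_vec_real)
lemma Vmask_on: "a \<in> Vmask \<pi> \<rho> \<epsilon> \<Longrightarrow> inner a \<pi> = \<rho>"
  by (simp add: Vmask_def inner_vec_real)

lemma closed_Vfair: "closed (Vfair \<pi> \<rho> \<epsilon>)"
  unfolding Vfair_def
  by (intro closed_Collect_conj closed_Collect_all closed_Collect_le closed_Collect_eq continuous_intros)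

lemma closed_Vmask: "closed (Vmask \<pi> \<rho> \<epsilon>)"
  unfolding Vmask_def
  by (intro closed_Collect_conj closed_Collect_all closed_Collect_le closed_Collect_eq continuous_intros)

lemma closed_slab:
  assumes "closed V" "\<And>a. a \<in> V \<Longrightarrow> inner a \<pi> = \<rho>"
  shows "closed (slab V)"
proof -
  have "slab V = {\<beta>. \<rho> \<le> inner \<beta> \<pi>} \<inter> {\<beta>. inner \<beta> \<pi> \<le> \<rho> + norm \<pi>} \<inter> alph -` V"
    using slab_iff[OF assms(2)] by blast
  moreover have "closed (alph -` V)"
  proof (rule continuous_closed_vimage[OF assms(1)])
    have e: "alph = (\<lambda>\<beta>. \<beta> - ((inner \<beta> \<pi> - \<rho>) / nq) *\<^sub>R \<pi>)" by (rule ext, rule alph_def)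
    fix x show "isCont alph x" unfolding e using nq_pos by (intro continuous_intros) auto
  qed
  moreover have "closed {\<beta>. \<rho> \<le> inner \<beta> \<pi>}" "closed {\<beta>. inner \<beta> \<pi> \<le> \<rho> + norm \<pi>}"
    by (intro closed_Collect_le continuous_intros)+
  ultimately show ?thesis by (metis closed_Int)
qed

lemma slab_Vfair: "\<beta> \<in> slab (Vfair \<pi> \<rho> \<epsilon>) \<longleftrightarrow> \<rho> \<le> inner \<beta> \<pi> \<and> inner \<beta> \<pi> \<le> \<rho> + norm \<pi> \<and> alph \<beta> \<in> Vfair \<pi> \<rho> \<epsilon>"
  by (rule slab_iff) (rule Vfair_on)
lemma slab_Vmask: "\<beta> \<in> slab (Vmask \<pi> \<rho> \<epsilon>) \<longleftrightarrow> \<rho> \<le> inner \<beta> \<pi> \<and> inner \<beta> \<pi> \<le> \<rho> + norm \<pi> \<and> alph \<beta> \<in> Vmask \<pi> \<rho> \<epsilon>"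
  by (rule slab_iff) (rule Vmask_on)

definition "e0f = P x0 * mm / 3"
definition "e0m = (P x0)^2 * mm / 8"

lemma e0f_pos: "e0f > 0" using P_pos mm_pos by (simp add: e0f_def)
lemma e0m_pos: "e0m > 0" using P_pos[of x0] mm_pos by (simp add: e0m_def)

definition "aFu \<epsilon> = (\<chi> i. if i = (x0,False) then \<rho> else if snd i then - \<epsilon> - \<rho> / nq * (\<pi>$(fst i,True) - \<pi>$(fst i,False)) else - (\<rho> / nq * \<pi>$i))"
definition "wFu \<epsilon> = (\<chi> i. if i = (x0,False) then norm \<pi> else if snd i then 2 * \<epsilon> else (1::real))"
definition "aFl \<epsilon> = (\<chi> i. if i = (x0,False) then \<rho> else if snd i then - \<epsilon> - \<rho> / nq * (\<pi>$(fst i,True) - \<pi>$(fst i,False)) else \<rho> - e0f - \<rho> / nq * \<pi>$i)"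
definition "wFl \<epsilon> = (\<chi> i. if i = (x0,False) then norm \<pi> else if snd i then 2 * \<epsilon> else 2 * e0f)"

lemma fair_up:
  assumes "\<beta> \<in> slab (Vfair \<pi> \<rho> \<epsilon>)"
  shows "Gf \<beta> \<in> cbox (aFu \<epsilon>) (aFu \<epsilon> + wFu \<epsilon>)"
proof -
  have h: "\<rho> \<le> inner \<beta> \<pi>" "inner \<beta> \<pi> \<le> \<rho> + norm \<pi>" "alph \<beta> \<in> Vfair \<pi> \<rho> \<epsilon>"
    using assms slab_Vfair by blast+
  then have a01: "\<forall>i. 0 \<le> alph \<beta> $ i \<and> alph \<beta> $ i \<le> 1" and ad: "\<forall>x. \<bar>alph \<beta> $ (x,True) - alph \<beta> $ (x,False)\<bar> \<le> \<epsilon>"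
    by (auto simp: Vfair_def)
  show ?thesis unfolding mem_box_w
  proof
    fix i :: "'x \<times> bool"
    obtain x b where i: "i = (x,b)" by fastforce
    show "aFu \<epsilon> $ i \<le> Gf \<beta> $ i \<and> Gf \<beta> $ i \<le> aFu \<epsilon> $ i + wFu \<epsilon> $ i"
    proof (cases b)
      case True
      have "- \<epsilon> \<le> alph \<beta> $ (x,True) - alph \<beta> $ (x,False) \<and> alph \<beta> $ (x,True) - alph \<beta> $ (x,False) \<le> \<epsilon>"
        using ad[rule_format, of x] unfolding abs_le_iff by linarith
      then show ?thesis using i True by (simp add: aFu_def wFu_def Gf_T)
    next
      case False
      show ?thesis
      proof (cases "x = x0")
        case True then show ?thesis using i False h by (simp add: aFu_def wFu_def Gf_0)
      next
        case xn: False
        then show ?thesis using i False a01[rule_format, of "(x,False)"] by (simp add: aFu_def wFu_def Gf_F)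
      qed
    qed
  qed
qed

lemma fair_lo:
  assumes "0 \<le> \<epsilon>" "\<epsilon> \<le> e0f" "Gf \<beta> \<in> cbox (aFl \<epsilon>) (aFl \<epsilon> + wFl \<epsilon>)"
  shows "\<beta> \<in> slab (Vfair \<pi> \<rho> \<epsilon>)"
proof -
  have c: "aFl \<epsilon> $ i \<le> Gf \<beta> $ i \<and> Gf \<beta> $ i \<le> aFl \<epsilon> $ i + wFl \<epsilon> $ i" for i
    using assms(3) unfolding mem_box_w by blast
  have c0: "\<rho> \<le> inner \<beta> \<pi>" "inner \<beta> \<pi> \<le> \<rho> + norm \<pi>" using c[of "(x0,False)"] by (auto simp: aFl_def wFl_def Gf_0)
  have cT: "\<bar>alph \<beta> $ (x,True) - alph \<beta> $ (x,False)\<bar> \<le> \<epsilon>" for x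
    using c[of "(x,True)"] unfolding abs_le_iff by (simp add: aFl_def wFl_def Gf_T)
  have cF: "\<bar>alph \<beta> $ (x,False) - \<rho>\<bar> \<le> e0f" if "x \<noteq> x0" for x
    using c[of "(x,False)"] that unfolding abs_le_iff by (simp add: aFl_def wFl_def Gf_F)
  have "\<forall>i. 0 \<le> alph \<beta> $ i \<and> alph \<beta> $ i \<le> 1"
    by (rule fair_point[OF alph_sum _ _ assms(1,2) e0f_def]) (use cT cF in auto)
  then have "alph \<beta> \<in> Vfair \<pi> \<rho> \<epsilon>" using cT alph_sum by (simp add: Vfair_def)
  then show ?thesis using c0 slab_Vfair by blast
qed

definition "aMu \<epsilon> = (\<chi> i. if i = (x0,False) then \<rho> else if i = (x0,True) then - \<epsilon> - km else - (\<rho> / nq * \<pi>$i))"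
definition "wMu \<epsilon> = (\<chi> i. if i = (x0,False) then norm \<pi> else if i = (x0,True) then 2 * \<epsilon> else (1::real))"
definition "aMl \<epsilon> = (\<chi> i. if i = (x0,False) then \<rho> else if i = (x0,True) then - \<epsilon> - km else \<rho> - e0m - \<rho> / nq * \<pi>$i)"
definition "wMl \<epsilon> = (\<chi> i. if i = (x0,False) then norm \<pi> else if i = (x0,True) then 2 * \<epsilon> else 2 * e0m)"

lemma Vmask_P: "\<alpha> \<in> Vmask \<pi> \<rho> \<epsilon> \<longleftrightarrow> (\<forall>i. 0 \<le> \<alpha>$i \<and> \<alpha>$i \<le> 1) \<and> (\<Sum>i\<in>UNIV. \<alpha>$i * \<pi>$i) = \<rho> \<and>
      \<bar>\<Sum>x\<in>UNIV. P x * (\<alpha>$(x,True) - \<alpha>$(x,False))\<bar> \<le> \<epsilon>"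
  by (simp add: Vmask_def P_def)

lemma mask_up:
  assumes "\<beta> \<in> slab (Vmask \<pi> \<rho> \<epsilon>)"
  shows "Gm \<beta> \<in> cbox (aMu \<epsilon>) (aMu \<epsilon> + wMu \<epsilon>)"
proof -
  have h: "\<rho> \<le> inner \<beta> \<pi>" "inner \<beta> \<pi> \<le> \<rho> + norm \<pi>" "alph \<beta> \<in> Vmask \<pi> \<rho> \<epsilon>"
    using assms slab_Vmask by blast+
  then have a01: "\<forall>i. 0 \<le> alph \<beta> $ i \<and> alph \<beta> $ i \<le> 1" and ad: "\<bar>\<Sum>x\<in>UNIV. P x * (alph \<beta> $ (x,True) - alph \<beta> $ (x,False))\<bar> \<le> \<epsilon>"
    by (auto simp: Vmask_P)
  show ?thesis unfolding mem_box_w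
  proof
    fix i :: "'x \<times> bool"
    obtain x b where i: "i = (x,b)" by fastforce
    show "aMu \<epsilon> $ i \<le> Gm \<beta> $ i \<and> Gm \<beta> $ i \<le> aMu \<epsilon> $ i + wMu \<epsilon> $ i"
    proof (cases "x = x0")
      case True
      show ?thesis
      proof (cases b)
        case True
        have "- \<epsilon> \<le> (\<Sum>x\<in>UNIV. P x * (alph \<beta> $ (x,True) - alph \<beta> $ (x,False))) \<and> (\<Sum>x\<in>UNIV. P x * (alph \<beta> $ (x,True) - alph \<beta> $ (x,False))) \<le> \<epsilon>"
          using ad unfolding abs_le_iff by linarith
        then show ?thesis using i True \<open>x = x0\<close> by (simp add: aMu_def wMu_def Gm_T)
      next
        case False
        then show ?thesis using i \<open>x = x0\<close> h by (simp add: aMu_def wMu_def Gm_0)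
      qed
    next
      case False
      then show ?thesis using i a01[rule_format, of "(x,b)"] by (simp add: aMu_def wMu_def Gm_O)
    qed
  qed
qed

lemma mask_lo:
  assumes "0 \<le> \<epsilon>" "\<epsilon> \<le> e0m" "Gm \<beta> \<in> cbox (aMl \<epsilon>) (aMl \<epsilon> + wMl \<epsilon>)"
  shows "\<beta> \<in> slab (Vmask \<pi> \<rho> \<epsilon>)"
proof -
  have c: "aMl \<epsilon> $ i \<le> Gm \<beta> $ i \<and> Gm \<beta> $ i \<le> aMl \<epsilon> $ i + wMl \<epsilon> $ i" for i
    using assms(3) unfolding mem_box_w by blast
  have c0: "\<rho> \<le> inner \<beta> \<pi>" "inner \<beta> \<pi> \<le> \<rho> + norm \<pi>" using c[of "(x0,False)"] by (auto simp: aMl_def wMl_def Gm_0)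
  have cT: "\<bar>\<Sum>x\<in>UNIV. P x * (alph \<beta> $ (x,True) - alph \<beta> $ (x,False))\<bar> \<le> \<epsilon>"
    using c[of "(x0,True)"] unfolding abs_le_iff by (simp add: aMl_def wMl_def Gm_T)
  have cO: "\<bar>alph \<beta> $ i - \<rho>\<bar> \<le> e0m" if "fst i \<noteq> x0" for i
  proof -
    have "i \<noteq> (x0,False)" "i \<noteq> (x0,True)" using that by auto
    then show ?thesis using c[of i] that unfolding abs_le_iff by (simp add: aMl_def wMl_def Gm_O)
  qed
  have "\<forall>i. 0 \<le> alph \<beta> $ i \<and> alph \<beta> $ i \<le> 1"
    by (rule mask_point[OF alph_sum cT _ assms(1,2) e0m_def]) (use cO in auto)
  then have "alph \<beta> \<in> Vmask \<pi> \<rho> \<epsilon>" using cT alph_sum by (simp add: Vmask_P)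
  then show ?thesis using c0 slab_Vmask by blast
qed

end

context polset begin

lemma norm_pos: "norm \<pi> > 0" using pi_nz by simp

lemma fair_up_meas:
  assumes "0 \<le> \<epsilon>"
  shows "measure lebesgue (cbox (aFu \<epsilon>) (aFu \<epsilon> + wFu \<epsilon>)) = norm \<pi> * (2 * \<epsilon>) ^ CARD('x)"
proof -
  have "measure lebesgue (cbox (aFu \<epsilon>) (aFu \<epsilon> + wFu \<epsilon>)) = (\<Prod>i\<in>UNIV. wFu \<epsilon> $ i)"
    by (rule measure_box_w) (use assms in \<open>auto simp: wFu_def\<close>)
  also have "\<dots> = (\<Prod>x\<in>UNIV. (if x = x0 then norm \<pi> else 1) * (2 * \<epsilon>))"
    unfolding prod_pairs by (rule prod.cong) (auto simp: wFu_def)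
  also have "\<dots> = norm \<pi> * (2 * \<epsilon>) ^ CARD('x)"
    by (simp add: prod.distrib prod_if1)
  finally show ?thesis .
qed

lemma fair_lo_meas:
  assumes "0 \<le> \<epsilon>"
  shows "measure lebesgue (cbox (aFl \<epsilon>) (aFl \<epsilon> + wFl \<epsilon>)) = norm \<pi> * (2 * e0f) ^ (CARD('x) - 1) * (2 * \<epsilon>) ^ CARD('x)"
proof -
  have "measure lebesgue (cbox (aFl \<epsilon>) (aFl \<epsilon> + wFl \<epsilon>)) = (\<Prod>i\<in>UNIV. wFl \<epsilon> $ i)"
    by (rule measure_box_w) (use assms e0f_pos in \<open>auto simp: wFl_def\<close>)
  also have "\<dots> = (\<Prod>x\<in>UNIV. (if x = x0 then norm \<pi> else 2 * e0f) * (2 * \<epsilon>))"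
    unfolding prod_pairs by (rule prod.cong) (auto simp: wFl_def)
  also have "\<dots> = norm \<pi> * (2 * e0f) ^ (CARD('x) - 1) * (2 * \<epsilon>) ^ CARD('x)"
    by (simp add: prod.distrib prod_if1)
  finally show ?thesis .
qed

lemma mask_up_meas:
  assumes "0 \<le> \<epsilon>"
  shows "measure lebesgue (cbox (aMu \<epsilon>) (aMu \<epsilon> + wMu \<epsilon>)) = norm \<pi> * (2 * \<epsilon>)"
proof -
  have "measure lebesgue (cbox (aMu \<epsilon>) (aMu \<epsilon> + wMu \<epsilon>)) = (\<Prod>i\<in>UNIV. wMu \<epsilon> $ i)"
    by (rule measure_box_w) (use assms in \<open>auto simp: wMu_def\<close>)
  also have "\<dots> = (\<Prod>i\<in>UNIV. if i = (x0,False) then norm \<pi> else if i = (x0,True) then 2 * \<epsilon> else 1)"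
    by (simp add: wMu_def)
  also have "\<dots> = norm \<pi> * (2 * \<epsilon>) * 1 ^ (CARD('x \<times> bool) - 2)"
    by (rule prod_if2) simp
  finally show ?thesis by simp
qed

lemma mask_lo_meas:
  assumes "0 \<le> \<epsilon>"
  shows "measure lebesgue (cbox (aMl \<epsilon>) (aMl \<epsilon> + wMl \<epsilon>)) = norm \<pi> * (2 * \<epsilon>) * (2 * e0m) ^ (CARD('x \<times> bool) - 2)"
proof -
  have "measure lebesgue (cbox (aMl \<epsilon>) (aMl \<epsilon> + wMl \<epsilon>)) = (\<Prod>i\<in>UNIV. wMl \<epsilon> $ i)"
    by (rule measure_box_w) (use assms e0m_pos in \<open>auto simp: wMl_def\<close>)
  also have "\<dots> = (\<Prod>i\<in>UNIV. if i = (x0,False) then norm \<pi> else if i = (x0,True) then 2 * \<epsilon> else 2 * e0m)"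
    by (simp add: wMl_def)
  also have "\<dots> = norm \<pi> * (2 * \<epsilon>) * (2 * e0m) ^ (CARD('x \<times> bool) - 2)"
    by (rule prod_if2) simp
  finally show ?thesis .
qed

lemma main_loc:
  "\<exists>c C \<epsilon>0. 0 < c \<and> c \<le> C \<and> 0 < \<epsilon>0 \<and>
    (\<forall>\<epsilon>. 0 < \<epsilon> \<and> \<epsilon> \<le> \<epsilon>0 \<longrightarrow>
       c * \<epsilon> ^ CARD('x) \<le> hyp_volume \<pi> (Vfair \<pi> \<rho> \<epsilon>) \<and>
       hyp_volume \<pi> (Vfair \<pi> \<rho> \<epsilon>) \<le> C * \<epsilon> ^ CARD('x) \<and>
       c * \<epsilon> \<le> hyp_volume \<pi> (Vmask \<pi> \<rho> \<epsilon>) \<and>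
       hyp_volume \<pi> (Vmask \<pi> \<rho> \<epsilon>) \<le> C * \<epsilon>)"
proof -
  obtain mf where mf: "mf > 0" "\<forall>S a1 b1 a2 b2. closed S \<longrightarrow> (\<forall>\<beta>\<in>S. Gf \<beta> \<in> cbox a2 b2) \<longrightarrow> (\<forall>\<beta>. Gf \<beta> \<in> cbox a1 b1 \<longrightarrow> \<beta> \<in> S) \<longrightarrow>
     mf * measure lebesgue (cbox a1 b1) \<le> measure lborel S \<and> measure lborel S \<le> mf * measure lebesgue (cbox a2 b2)"
    using sandwich[OF Gf_linear Gf_inj] by blast
  obtain mk where mk: "mk > 0" "\<forall>S a1 b1 a2 b2. closed S \<longrightarrow> (\<forall>\<beta>\<in>S. Gm \<beta> \<in> cbox a2 b2) \<longrightarrow> (\<forall>\<beta>. Gm \<beta> \<in> cbox a1 b1 \<longrightarrow> \<beta> \<in> S) \<longrightarrow>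
     mk * measure lebesgue (cbox a1 b1) \<le> measure lborel S \<and> measure lborel S \<le> mk * measure lebesgue (cbox a2 b2)"
    using sandwich[OF Gm_linear Gm_inj] by blast
  define k where "k = CARD('x)"
  define K where "K = CARD('x \<times> bool)"
  define c1 where "c1 = mf * (norm \<pi> * (2 * e0f) ^ (k - 1) * 2 ^ k)"
  define C1 where "C1 = mf * (norm \<pi> * 2 ^ k)"
  define c2 where "c2 = mk * (norm \<pi> * 2 * (2 * e0m) ^ (K - 2))"
  define C2 where "C2 = mk * (norm \<pi> * 2)"
  define c where "c = min c1 c2"
  define C where "C = max (max C1 C2) c"
  define \<epsilon>0 where "\<epsilon>0 = min e0f e0m"
  have c1p: "c1 > 0" using mf norm_pos e0f_pos by (simp add: c1_def)
  have c2p: "c2 > 0" using mk norm_pos e0m_pos by (simp add: c2_def)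
  have cp: "c > 0" using c1p c2p by (simp add: c_def)
  have cC: "c \<le> C" by (simp add: C_def)
  have e0p: "\<epsilon>0 > 0" using e0f_pos e0m_pos by (simp add: \<epsilon>0_def)
  have main: "\<forall>\<epsilon>. 0 < \<epsilon> \<and> \<epsilon> \<le> \<epsilon>0 \<longrightarrow>
       c * \<epsilon> ^ CARD('x) \<le> hyp_volume \<pi> (Vfair \<pi> \<rho> \<epsilon>) \<and>
       hyp_volume \<pi> (Vfair \<pi> \<rho> \<epsilon>) \<le> C * \<epsilon> ^ CARD('x) \<and>
       c * \<epsilon> \<le> hyp_volume \<pi> (Vmask \<pi> \<rho> \<epsilon>) \<and>
       hyp_volume \<pi> (Vmask \<pi> \<rho> \<epsilon>) \<le> C * \<epsilon>"
  proof (intro allI impI)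
    fix \<epsilon> :: real assume "0 < \<epsilon> \<and> \<epsilon> \<le> \<epsilon>0"
    then have ep: "0 < \<epsilon>" "\<epsilon> \<le> e0f" "\<epsilon> \<le> e0m" by (auto simp: \<epsilon>0_def)
    let ?Sf = "slab (Vfair \<pi> \<rho> \<epsilon>)"
    let ?Sm = "slab (Vmask \<pi> \<rho> \<epsilon>)"
    have hvf: "hyp_volume \<pi> (Vfair \<pi> \<rho> \<epsilon>) = measure lborel ?Sf" by (simp add: hyp_volume_def slab_def)
    have hvm: "hyp_volume \<pi> (Vmask \<pi> \<rho> \<epsilon>) = measure lborel ?Sm" by (simp add: hyp_volume_def slab_def)
    have clf: "closed ?Sf" by (rule closed_slab[OF closed_Vfair Vfair_on])
    have clm: "closed ?Sm" by (rule closed_slab[OF closed_Vmask Vmask_on])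
    have f: "mf * measure lebesgue (cbox (aFl \<epsilon>) (aFl \<epsilon> + wFl \<epsilon>)) \<le> measure lborel ?Sf \<and>
             measure lborel ?Sf \<le> mf * measure lebesgue (cbox (aFu \<epsilon>) (aFu \<epsilon> + wFu \<epsilon>))"
      using mf(2) clf fair_up fair_lo[of \<epsilon>] ep by (meson less_imp_le)
    have m: "mk * measure lebesgue (cbox (aMl \<epsilon>) (aMl \<epsilon> + wMl \<epsilon>)) \<le> measure lborel ?Sm \<and>
             measure lborel ?Sm \<le> mk * measure lebesgue (cbox (aMu \<epsilon>) (aMu \<epsilon> + wMu \<epsilon>))"
      using mk(2) clm mask_up mask_lo[of \<epsilon>] ep by (meson less_imp_le)
    have f1: "c1 * \<epsilon> ^ k \<le> hyp_volume \<pi> (Vfair \<pi> \<rho> \<epsilon>)"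
      using f hvf fair_lo_meas[of \<epsilon>] ep by (simp add: c1_def k_def power_mult_distrib mult.assoc)
    have f2: "hyp_volume \<pi> (Vfair \<pi> \<rho> \<epsilon>) \<le> C1 * \<epsilon> ^ k"
      using f hvf fair_up_meas[of \<epsilon>] ep by (simp add: C1_def k_def power_mult_distrib mult.assoc)
    have m1: "c2 * \<epsilon> \<le> hyp_volume \<pi> (Vmask \<pi> \<rho> \<epsilon>)"
      using m hvm mask_lo_meas[of \<epsilon>] ep by (simp add: c2_def K_def mult_ac)
    have m2: "hyp_volume \<pi> (Vmask \<pi> \<rho> \<epsilon>) \<le> C2 * \<epsilon>"
      using m hvm mask_up_meas[of \<epsilon>] ep by (simp add: C2_def mult_ac)
    have ek: "0 \<le> \<epsilon> ^ k" using ep by simp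
    have "c * \<epsilon> ^ k \<le> c1 * \<epsilon> ^ k" by (rule mult_right_mono[OF _ ek]) (simp add: c_def)
    moreover have "C1 * \<epsilon> ^ k \<le> C * \<epsilon> ^ k" by (rule mult_right_mono[OF _ ek]) (simp add: C_def)
    moreover have "c * \<epsilon> \<le> c2 * \<epsilon>" using ep by (intro mult_right_mono) (auto simp: c_def)
    moreover have "C2 * \<epsilon> \<le> C * \<epsilon>" using ep by (intro mult_right_mono) (auto simp: C_def)
    ultimately show "c * \<epsilon> ^ CARD('x) \<le> hyp_volume \<pi> (Vfair \<pi> \<rho> \<epsilon>) \<and>
      hyp_volume \<pi> (Vfair \<pi> \<rho> \<epsilon>) \<le> C * \<epsilon> ^ CARD('x) \<and>
      c * \<epsilon> \<le> hyp_volume \<pi> (Vmask \<pi> \<rho> \<epsilon>) \<and>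
      hyp_volume \<pi> (Vmask \<pi> \<rho> \<epsilon>) \<le> C * \<epsilon>"
      using f1 f2 m1 m2 unfolding k_def by linarith
  qed
  show ?thesis using cp cC e0p main by blast
qed

end

theorem mainTheorem10:
  fixes \<pi> :: "real^('x::finite \<times> bool)" and \<rho> :: real
  assumes "CARD('x) \<ge> 2"
    and "\<forall>i. \<pi>$i > 0"
    and "(\<Sum>i\<in>UNIV. \<pi>$i) = 1"
    and "0 < \<rho>" and "\<rho> < 1"
  shows "\<exists>c C \<epsilon>0. 0 < c \<and> c \<le> C \<and> 0 < \<epsilon>0 \<and>
    (\<forall>\<epsilon>. 0 < \<epsilon> \<and> \<epsilon> \<le> \<epsilon>0 \<longrightarrow>
       c * \<epsilon> ^ CARD('x) \<le> hyp_volume \<pi> (Vfair \<pi> \<rho> \<epsilon>) \<and>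
       hyp_volume \<pi> (Vfair \<pi> \<rho> \<epsilon>) \<le> C * \<epsilon> ^ CARD('x) \<and>
       c * \<epsilon> \<le> hyp_volume \<pi> (Vmask \<pi> \<rho> \<epsilon>) \<and>
       hyp_volume \<pi> (Vmask \<pi> \<rho> \<epsilon>) \<le> C * \<epsilon>)"
proof -
  interpret polset \<pi> \<rho> "undefined :: 'x"
    by unfold_locales (use assms in auto)
  show ?thesis by (rule main_loc)
qed

end
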